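(* Let $n\ge 2$ and let $(\epsilon_k)_{k\ge1}$ be a sequence in $(0,1)$ strictly decreasing to $0$. For $\vec a = (a_1,\dots,a_n)\in\ell^\infty_n$ and $1\le r\le n$ put $\varphi^r_k(\vec a) = a_r(1-\epsilon_k) + \frac{\epsilon_k}{n-1}\sum_{j\ne r}a_j$, and $\psi_k(\vec a) = (\varphi^1_k(\vec a),\dots,\varphi^n_k(\vec a))\in\ell^\infty_n$. Let $H = \bigoplus_{k=1}^\infty H_k$ with each $H_k = \mathbb{C}^n$, and define $\Psi : \ell^\infty_n\to B(H)$ by letting $\Psi(\vec a)$ be the diagonal operator acting on $H_k$ as the diagonal matrix with diagonal $\psi_k(\vec a)$. Then $\Psi$ is a unital complete isometry, and if $p,q\in B(H)$ are projections such that $(1-q)\Psi(\vec a) = \Psi(\vec a)(1-p)$ for all $\vec a$ and $\vec a\mapsto (1-q)\Psi(\vec a)$ is a triple morphism, then $p = q = 1$ (so this triple morphism is the zero map). In particular, there is no projection $p\in B(H)$ other than $1$ for which $(1-p)\Psi(\cdot) = \Psi(\cdot)(1-p)$ is a *-homomorphism.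
   Context: $\ell^\infty_n$ is $\mathbb{C}^n$ with the sup norm, a commutative $C^*$-algebra. A triple morphism is a linear map $T$ with $T(xy^*z) = T(x)T(y)^*T(z)$. *)

theory Defs
  imports Complex_Main "HOL-Library.Cardinality"
begin

text \<open>The Hilbert space H = direct sum over k of C^n, with n = CARD('n).
  Vectors of H are modelled as square-summable functions  nat => 'n => complex
  (block index k, coordinate r).  Bounded operators on H are modelled as
  functions on such vectors; they are only ever compared on the carrier L2.\<close>

type_synonym 'n hvec = "nat \<Rightarrow> 'n \<Rightarrow> complex"
type_synonym 'n hop = "'n hvec \<Rightarrow> 'n hvec"

definition L2 :: "'n::finite hvec set" where
  "L2 = {f. summable (\<lambda>k. \<Sum>r\<in>UNIV. (cmod (f k r))\<^sup>2)}"

definition l2sq :: "'n::finite hvec \<Rightarrow> real" where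
  "l2sq f = (\<Sum>k. \<Sum>r\<in>UNIV. (cmod (f k r))\<^sup>2)"

definition l2norm :: "'n::finite hvec \<Rightarrow> real" where
  "l2norm f = sqrt (l2sq f)"

definition l2inner :: "'n::finite hvec \<Rightarrow> 'n hvec \<Rightarrow> complex" where
  "l2inner f g = (\<Sum>k. \<Sum>r\<in>UNIV. f k r * cnj (g k r))"

definition hadd :: "'n hvec \<Rightarrow> 'n hvec \<Rightarrow> 'n hvec" where
  "hadd f g = (\<lambda>k r. f k r + g k r)"

definition hsub :: "'n hvec \<Rightarrow> 'n hvec \<Rightarrow> 'n hvec" where
  "hsub f g = (\<lambda>k r. f k r - g k r)"

definition hsmul :: "complex \<Rightarrow> 'n hvec \<Rightarrow> 'n hvec" where
  "hsmul c f = (\<lambda>k r. c * f k r)"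

definition bounded_op :: "'n::finite hop \<Rightarrow> bool" where
  "bounded_op T \<longleftrightarrow>
     (\<forall>f\<in>L2. T f \<in> L2) \<and>
     (\<forall>f\<in>L2. \<forall>g\<in>L2. T (hadd f g) = hadd (T f) (T g)) \<and>
     (\<forall>c. \<forall>f\<in>L2. T (hsmul c f) = hsmul c (T f)) \<and>
     (\<exists>C. \<forall>f\<in>L2. l2norm (T f) \<le> C * l2norm f)"

definition l2_adjoint :: "'n::finite hop \<Rightarrow> 'n hop" where
  "l2_adjoint S g = (THE h. h \<in> L2 \<and> (\<forall>f\<in>L2. l2inner (S f) g = l2inner f h))"

definition projection :: "'n::finite hop \<Rightarrow> bool" where
  "projection p \<longleftrightarrow> bounded_op p \<and> (\<forall>f\<in>L2. p (p f) = p f) \<and>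
     (\<forall>f\<in>L2. \<forall>g\<in>L2. l2inner (p f) g = l2inner f (p g))"

definition linear_map :: "(('n::finite \<Rightarrow> complex) \<Rightarrow> 'n hop) \<Rightarrow> bool" where
  "linear_map T \<longleftrightarrow>
     (\<forall>a b. \<forall>f\<in>L2. T (\<lambda>r. a r + b r) f = hadd (T a f) (T b f)) \<and>
     (\<forall>c a. \<forall>f\<in>L2. T (\<lambda>r. c * a r) f = hsmul c (T a f))"

definition triple_morphism :: "(('n::finite \<Rightarrow> complex) \<Rightarrow> 'n hop) \<Rightarrow> bool" where
  "triple_morphism T \<longleftrightarrow> linear_map T \<and>
     (\<forall>x y z. \<forall>f\<in>L2. T (\<lambda>r. x r * cnj (y r) * z r) f = T x (l2_adjoint (T y) (T z f)))"

definition star_hom :: "(('n::finite \<Rightarrow> complex) \<Rightarrow> 'n hop) \<Rightarrow> bool" where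
  "star_hom T \<longleftrightarrow> linear_map T \<and>
     (\<forall>a b. \<forall>f\<in>L2. T (\<lambda>r. a r * b r) f = T a (T b f)) \<and>
     (\<forall>a. \<forall>f\<in>L2. T (\<lambda>r. cnj (a r)) f = l2_adjoint (T a) f)"

definition cmat_norm :: "nat \<Rightarrow> (nat \<Rightarrow> nat \<Rightarrow> complex) \<Rightarrow> real" where
  "cmat_norm m M = Sup {sqrt (\<Sum>i<m. (cmod (\<Sum>j<m. M i j * v j))\<^sup>2) | v.
       (\<Sum>j<m. (cmod (v j))\<^sup>2) \<le> 1}"

text \<open>Norm in M_m(l^infty_n) = l^infty_n(M_m) (canonical C*-algebra structure).\<close>
definition linf_mat_norm :: "nat \<Rightarrow> (nat \<Rightarrow> nat \<Rightarrow> ('n::finite \<Rightarrow> complex)) \<Rightarrow> real" where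
  "linf_mat_norm m A = Max (range (\<lambda>r. cmat_norm m (\<lambda>i j. A i j r)))"

text \<open>Norm in M_m(B(H)) = B(H^m).\<close>
definition bh_mat_norm :: "nat \<Rightarrow> (nat \<Rightarrow> nat \<Rightarrow> 'n::finite hop) \<Rightarrow> real" where
  "bh_mat_norm m X = Sup {sqrt (\<Sum>i<m. l2sq (\<lambda>k r. \<Sum>j<m. X i j (F j) k r)) | F.
       (\<forall>j<m. F j \<in> L2) \<and> (\<Sum>j<m. l2sq (F j)) \<le> 1}"

definition complete_isometry :: "(('n::finite \<Rightarrow> complex) \<Rightarrow> 'n hop) \<Rightarrow> bool" where
  "complete_isometry T \<longleftrightarrow> linear_map T \<and> (\<forall>a. bounded_op (T a)) \<and>
     (\<forall>m\<ge>1. \<forall>A. bh_mat_norm m (\<lambda>i j. T (A i j)) = linf_mat_norm m A)"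

definition unital_map :: "(('n::finite \<Rightarrow> complex) \<Rightarrow> 'n hop) \<Rightarrow> bool" where
  "unital_map T \<longleftrightarrow> (\<forall>f\<in>L2. T (\<lambda>r. 1) f = f)"

text \<open>phi^r_k and Psi (blocks indexed from k = 0, i.e. eps 0 is the paper's epsilon_1).\<close>
definition phi :: "(nat \<Rightarrow> real) \<Rightarrow> nat \<Rightarrow> ('n::finite \<Rightarrow> complex) \<Rightarrow> 'n \<Rightarrow> complex" where
  "phi eps k a r = a r * complex_of_real (1 - eps k)
      + complex_of_real (eps k / (real CARD('n) - 1)) * (\<Sum>j\<in>UNIV - {r}. a j)"

definition Psi :: "(nat \<Rightarrow> real) \<Rightarrow> ('n::finite \<Rightarrow> complex) \<Rightarrow> 'n hop" where
  "Psi eps a = (\<lambda>f k r. phi eps k a r * f k r)"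

end

theory Submission
  imports Defs "HOL-Analysis.Analysis"
begin

definition vn :: "nat \<Rightarrow> (nat \<Rightarrow> complex) \<Rightarrow> real" where
  "vn m v = sqrt (\<Sum>j<m. (cmod (v j))\<^sup>2)"

definition mv :: "nat \<Rightarrow> (nat \<Rightarrow> nat \<Rightarrow> complex) \<Rightarrow> (nat \<Rightarrow> complex) \<Rightarrow> nat \<Rightarrow> complex" where
  "mv m M v = (\<lambda>i. \<Sum>j<m. M i j * v j)"

lemma vn_L2: "vn m v = L2_set (\<lambda>j. cmod (v j)) {..<m}"
  by (simp add: vn_def L2_set_def)

lemma vn_nonneg: "0 \<le> vn m v"
  by (simp add: vn_L2)

lemma vn_sq: "(vn m v)\<^sup>2 = (\<Sum>j<m. (cmod (v j))\<^sup>2)"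
  unfolding vn_def by (simp add: sum_nonneg)

lemma vn_triangle: "vn m (\<lambda>i. x i + y i) \<le> vn m x + vn m y"
proof -
  have "vn m (\<lambda>i. x i + y i) \<le> L2_set (\<lambda>i. cmod (x i) + cmod (y i)) {..<m}"
    unfolding vn_L2 by (rule L2_set_mono) (auto simp: norm_triangle_ineq)
  also have "\<dots> \<le> vn m x + vn m y"
    unfolding vn_L2 by (rule L2_set_triangle_ineq)
  finally show ?thesis .
qed

lemma vn_scale: "vn m (\<lambda>i. c * v i) = cmod c * vn m v"
  unfolding vn_L2 by (simp add: L2_set_right_distrib norm_mult)

lemma vn_sum: "finite S \<Longrightarrow> vn m (\<lambda>i. \<Sum>s\<in>S. x s i) \<le> (\<Sum>s\<in>S. vn m (x s))"
proof (induction S rule: finite_induct)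
  case empty
  then show ?case by (simp add: vn_def)
next
  case (insert a S)
  have "vn m (\<lambda>i. \<Sum>s\<in>insert a S. x s i) = vn m (\<lambda>i. x a i + (\<Sum>s\<in>S. x s i))"
    using insert by simp
  also have "\<dots> \<le> vn m (x a) + vn m (\<lambda>i. \<Sum>s\<in>S. x s i)" by (rule vn_triangle)
  also have "\<dots> \<le> vn m (x a) + (\<Sum>s\<in>S. vn m (x s))" using insert by simp
  finally show ?case using insert by simp
qed

lemma vn_member: "j < m \<Longrightarrow> cmod (v j) \<le> vn m v"
  unfolding vn_L2 by (rule member_le_L2_set) auto

lemma mv_scale: "mv m M (\<lambda>j. c * v j) = (\<lambda>i. c * mv m M v i)"
  unfolding mv_def by (auto simp: sum_distrib_left ac_simps)

lemma cmat_alt: "cmat_norm m M = Sup {vn m (mv m M v) | v. vn m v \<le> 1}"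
  unfolding cmat_norm_def vn_def mv_def by simp

lemma cmat_bdd: "bdd_above {vn m (mv m M v) | v. vn m v \<le> 1}"
proof -
  have "vn m (mv m M v) \<le> (\<Sum>i<m. \<Sum>j<m. cmod (M i j))" if "vn m v \<le> 1" for v
  proof -
    have "cmod (mv m M v i) \<le> (\<Sum>j<m. cmod (M i j))" for i
    proof -
      have "cmod (mv m M v i) \<le> (\<Sum>j<m. cmod (M i j * v j))"
        unfolding mv_def by (rule norm_sum)
      also have "\<dots> \<le> (\<Sum>j<m. cmod (M i j))"
      proof (rule sum_mono)
        fix j assume "j \<in> {..<m}"
        then have "cmod (v j) \<le> 1" using vn_member[of j m v] that by auto
        then show "cmod (M i j * v j) \<le> cmod (M i j)"
          by (simp add: norm_mult mult_left_le)
      qed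
      finally show ?thesis .
    qed
    then have "vn m (mv m M v) \<le> L2_set (\<lambda>i. \<Sum>j<m. cmod (M i j)) {..<m}"
      unfolding vn_L2 by (intro L2_set_mono) auto
    also have "\<dots> \<le> (\<Sum>i<m. \<Sum>j<m. cmod (M i j))"
      by (rule L2_set_le_sum) (simp add: sum_nonneg)
    finally show ?thesis .
  qed
  then show ?thesis unfolding bdd_above_def by blast
qed

lemma cmat_upper: "vn m v \<le> 1 \<Longrightarrow> vn m (mv m M v) \<le> cmat_norm m M"
  unfolding cmat_alt by (rule cSup_upper) (use cmat_bdd in auto)

lemma cmat_nonneg: "0 \<le> cmat_norm m M"
  using cmat_upper[of m "\<lambda>_. 0" M] vn_nonneg[of m "mv m M (\<lambda>_. 0)"]
  by (simp add: vn_def mv_def)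

lemma cmat_least: "(\<And>v. vn m v \<le> 1 \<Longrightarrow> vn m (mv m M v) \<le> L) \<Longrightarrow> cmat_norm m M \<le> L"
  unfolding cmat_alt by (rule cSup_least) (auto intro!: exI[of _ "\<lambda>_. 0"] simp: vn_def)

lemma cmat_bound: "vn m (mv m M v) \<le> cmat_norm m M * vn m v"
proof (cases "vn m v = 0")
  case True
  then have "\<forall>j<m. v j = 0" using vn_member[of _ m v] vn_nonneg by (metis norm_le_zero_iff)
  then have "mv m M v = (\<lambda>_. 0)" unfolding mv_def by auto
  then show ?thesis using True by (simp add: vn_def)
next
  case False
  then have pos: "vn m v > 0" using vn_nonneg[of m v] by linarith
  define c where "c = complex_of_real (1 / vn m v)"
  have cc: "cmod c = 1 / vn m v" unfolding c_def using pos by (simp add: norm_divide)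
  have "vn m (\<lambda>j. c * v j) = 1" using pos by (simp add: vn_scale cc)
  then have "vn m (mv m M (\<lambda>j. c * v j)) \<le> cmat_norm m M" by (intro cmat_upper) simp
  then have "vn m (mv m M v) / vn m v \<le> cmat_norm m M"
    by (simp add: mv_scale vn_scale cc)
  then show ?thesis using pos by (simp add: divide_le_eq)
qed

definition cf :: "(nat \<Rightarrow> real) \<Rightarrow> nat \<Rightarrow> 'n::finite \<Rightarrow> 'n \<Rightarrow> real" where
  "cf eps k r s = (if s = r then 1 - eps k else eps k / (real CARD('n) - 1))"

lemma phi_cf: fixes a :: "'n::finite \<Rightarrow> complex" shows "phi eps k a r = (\<Sum>s\<in>UNIV. complex_of_real (cf eps k r s) * a s)"
proof -
  have 1: "(\<Sum>s\<in>UNIV. complex_of_real (cf eps k r s) * a s)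
      = complex_of_real (cf eps k r r) * a r + (\<Sum>s\<in>UNIV-{r}. complex_of_real (cf eps k r s) * a s)"
    by (simp add: sum.remove)
  have 2: "(\<Sum>s\<in>UNIV-{r}. complex_of_real (cf eps k r s) * a s)
      = complex_of_real (eps k / (real CARD('n) - 1)) * (\<Sum>s\<in>UNIV-{r}. a s)"
    unfolding sum_distrib_left by (rule sum.cong) (auto simp: cf_def)
  show ?thesis unfolding phi_def 1 2 by (simp add: cf_def mult.commute)
qed

lemma cf_nonneg:
  assumes "CARD('n::finite) \<ge> 2" "0 < eps k" "eps k < 1"
  shows "0 \<le> cf eps k (r::'n) s"
  using assms by (auto simp: cf_def)

lemma cf_sum:
  assumes "CARD('n::finite) \<ge> 2"
  shows "(\<Sum>s\<in>UNIV. cf eps k (r::'n) s) = 1"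
proof -
  have c: "card (UNIV - {r}) = CARD('n) - 1" by (simp add: card_Diff_singleton)
  have "(\<Sum>s\<in>UNIV. cf eps k (r::'n) s) = cf eps k r r + (\<Sum>s\<in>UNIV-{r}. cf eps k r s)"
    by (simp add: sum.remove)
  also have "(\<Sum>s\<in>UNIV-{r}. cf eps k r s) = (\<Sum>s\<in>UNIV-{r}. eps k / (real CARD('n) - 1))"
    by (rule sum.cong) (auto simp: cf_def)
  also have "\<dots> = real (CARD('n) - 1) * (eps k / (real CARD('n) - 1))" using c by simp
  also have "\<dots> = eps k" using assms by (simp add: of_nat_diff)
  finally show ?thesis by (simp add: cf_def)
qed

definition Mk :: "(nat \<Rightarrow> real) \<Rightarrow> nat \<Rightarrow> (nat \<Rightarrow> nat \<Rightarrow> ('n::finite \<Rightarrow> complex)) \<Rightarrow> 'n \<Rightarrow> nat \<Rightarrow> nat \<Rightarrow> complex" where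
  "Mk eps k A r = (\<lambda>i j. phi eps k (A i j) r)"

lemma mv_Mk: "mv m (Mk eps k A r) v =
   (\<lambda>i. \<Sum>s\<in>UNIV. complex_of_real (cf eps k r s) * mv m (\<lambda>i j. A i j s) v i)"
  unfolding mv_def Mk_def phi_cf
  by (auto simp: sum_distrib_left sum_distrib_right ac_simps intro: sum.swap)

lemma cmat_le_linf: "cmat_norm m (\<lambda>i j. A i j s) \<le> linf_mat_norm m (A :: nat \<Rightarrow> nat \<Rightarrow> ('n::finite \<Rightarrow> complex))"
  unfolding linf_mat_norm_def by (rule Max_ge) auto

lemma Mk_bound:
  assumes "CARD('n::finite) \<ge> 2" "0 < eps k" "eps k < 1"
  shows "vn m (mv m (Mk eps k (A :: nat \<Rightarrow> nat \<Rightarrow> ('n \<Rightarrow> complex)) r) v) \<le> linf_mat_norm m A * vn m v"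
proof -
  have nn: "\<And>r s. 0 \<le> cf eps k (r::'n) s" using cf_nonneg assms by blast
  have "vn m (mv m (Mk eps k A r) v) \<le> (\<Sum>s\<in>UNIV. vn m (\<lambda>i. complex_of_real (cf eps k r s) * mv m (\<lambda>i j. A i j s) v i))"
    unfolding mv_Mk by (rule vn_sum) simp
  also have "\<dots> = (\<Sum>s\<in>UNIV. cf eps k r s * vn m (mv m (\<lambda>i j. A i j s) v))"
    using nn by (simp add: vn_scale)
  also have "\<dots> \<le> (\<Sum>s\<in>UNIV. cf eps k r s * (linf_mat_norm m A * vn m v))"
  proof (rule sum_mono)
    fix s
    have "vn m (mv m (\<lambda>i j. A i j s) v) \<le> cmat_norm m (\<lambda>i j. A i j s) * vn m v" by (rule cmat_bound)
    also have "\<dots> \<le> linf_mat_norm m A * vn m v"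
      by (rule mult_right_mono[OF cmat_le_linf vn_nonneg])
    finally show "cf eps k r s * vn m (mv m (\<lambda>i j. A i j s) v) \<le> cf eps k r s * (linf_mat_norm m A * vn m v)"
      by (rule mult_left_mono) (rule nn)
  qed
  also have "\<dots> = linf_mat_norm m A * vn m v"
    using cf_sum[OF assms(1)] by (simp flip: sum_distrib_right)
  finally show ?thesis .
qed

lemma linf_nonneg: "0 \<le> linf_mat_norm m (A :: nat \<Rightarrow> nat \<Rightarrow> ('n::finite \<Rightarrow> complex))"
  using cmat_le_linf[of m A undefined] cmat_nonneg[of m] by (meson order.trans)

lemma phi_lim:
  assumes "CARD('n::finite) \<ge> 2" "eps \<longlonglongrightarrow> 0"
  shows "(\<lambda>k. phi eps k (a::'n \<Rightarrow> complex) r) \<longlonglongrightarrow> a r"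
proof -
  have "(\<lambda>k. phi eps k a r) \<longlonglongrightarrow> a r * complex_of_real (1 - 0)
      + complex_of_real (0 / (real CARD('n) - 1)) * (\<Sum>j\<in>UNIV - {r}. a j)"
    unfolding phi_def using assms(1) by (intro tendsto_intros assms) auto
  then show ?thesis by simp
qed

lemma Mk_lim:
  assumes "CARD('n::finite) \<ge> 2" "eps \<longlonglongrightarrow> 0"
  shows "(\<lambda>k. vn m (mv m (Mk eps k (A :: nat \<Rightarrow> nat \<Rightarrow> ('n \<Rightarrow> complex)) r) v))
     \<longlonglongrightarrow> vn m (mv m (\<lambda>i j. A i j r) v)"
  unfolding vn_def mv_def Mk_def
  by (intro tendsto_intros phi_lim[OF assms])

lemma L2_summable: "f \<in> L2 \<Longrightarrow> summable (\<lambda>k. \<Sum>r\<in>UNIV. (cmod (f k r))\<^sup>2)"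
  by (simp add: L2_def)

lemma single_inner: fixes s :: "'n::finite" shows "(\<lambda>k'. \<Sum>r\<in>UNIV. (cmod (if k' = k \<and> r = s then c else 0))\<^sup>2)
   = (\<lambda>k'. if k' = k then (cmod c)\<^sup>2 else 0)"
proof
  fix k'
  show "(\<Sum>r\<in>UNIV. (cmod (if k' = k \<and> r = s then c else 0))\<^sup>2) = (if k' = k then (cmod c)\<^sup>2 else 0)"
  proof (cases "k' = k")
    case True
    have "(\<Sum>r\<in>UNIV. (cmod (if k' = k \<and> r = s then c else 0))\<^sup>2) = (\<Sum>r\<in>UNIV. if r = s then (cmod c)\<^sup>2 else 0)"
      using True by (intro sum.cong) auto
    then show ?thesis using True by (simp add: sum.delta)
  qed simp
qed

lemma single_L2: "(\<lambda>k' r. if k' = k \<and> r = s then c else 0) \<in> (L2 :: 'n::finite hvec set)"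
  and single_l2sq: "l2sq (\<lambda>k' r. if k' = k \<and> r = (s::'n::finite) then c else 0) = (cmod c)\<^sup>2"
proof -
  have "(\<lambda>k'. if k' = k then (cmod c)\<^sup>2 else 0) sums (cmod c)\<^sup>2"
    using sums_single[of k "\<lambda>_. (cmod c)\<^sup>2"] by simp
  then have "(\<lambda>k'. \<Sum>r\<in>UNIV. (cmod (if k' = k \<and> r = s then c else 0))\<^sup>2) sums (cmod c)\<^sup>2"
    by (simp only: single_inner)
  then show "(\<lambda>k' r. if k' = k \<and> r = s then c else 0) \<in> (L2 :: 'n::finite hvec set)"
    and "l2sq (\<lambda>k' r. if k' = k \<and> r = (s::'n::finite) then c else 0) = (cmod c)\<^sup>2"
    unfolding L2_def l2sq_def by (auto simp: sums_iff)
qed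

lemma upper_sum:
  fixes F :: "nat \<Rightarrow> 'n::finite hvec"
  assumes F: "\<forall>j<m. F j \<in> L2"
    and bd: "\<And>k r v. vn m (mv m (M k r) v) \<le> L * vn m v" and L0: "0 \<le> L"
  shows "(\<Sum>i<m. l2sq (\<lambda>k r. mv m (M k r) (\<lambda>j. F j k r) i)) \<le> L\<^sup>2 * (\<Sum>j<m. l2sq (F j))"
proof -
  define G where "G i k r = mv m (M k r) (\<lambda>j. F j k r) i" for i k r
  define Y where "Y k = (\<Sum>r\<in>UNIV. \<Sum>j<m. (cmod (F j k r))\<^sup>2)" for k
  define X where "X k = (\<Sum>r\<in>UNIV. \<Sum>i<m. (cmod (G i k r))\<^sup>2)" for k
  have Y': "Y = (\<lambda>k. \<Sum>j<m. \<Sum>r\<in>UNIV. (cmod (F j k r))\<^sup>2)"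
    unfolding Y_def by (rule ext, rule sum.swap)
  have Ys: "summable Y" unfolding Y' by (rule summable_sum) (use F in \<open>auto simp: L2_def\<close>)
  have sY: "suminf Y = (\<Sum>j<m. l2sq (F j))"
  proof -
    have "suminf Y = (\<Sum>j<m. \<Sum>k. \<Sum>r\<in>UNIV. (cmod (F j k r))\<^sup>2)"
      unfolding Y' by (rule suminf_sum) (use F in \<open>auto simp: L2_def\<close>)
    then show ?thesis unfolding l2sq_def .
  qed
  have XY: "X k \<le> L\<^sup>2 * Y k" for k
  proof -
    have "X k = (\<Sum>r\<in>UNIV. (vn m (mv m (M k r) (\<lambda>j. F j k r)))\<^sup>2)"
      unfolding X_def G_def vn_sq by simp
    also have "\<dots> \<le> (\<Sum>r\<in>UNIV. (L * vn m (\<lambda>j. F j k r))\<^sup>2)"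
      by (intro sum_mono power_mono bd vn_nonneg)
    also have "\<dots> = L\<^sup>2 * Y k"
      unfolding Y_def by (simp add: power_mult_distrib vn_sq sum_distrib_left)
    finally show ?thesis .
  qed
  have X0: "0 \<le> X k" for k unfolding X_def by (simp add: sum_nonneg)
  have Xs: "summable X"
    by (rule summable_comparison_test'[of "\<lambda>k. L\<^sup>2 * Y k" 0]) (use Ys XY X0 in auto)
  have gi: "summable (\<lambda>k. \<Sum>r\<in>UNIV. (cmod (G i k r))\<^sup>2)" if "i < m" for i
  proof (rule summable_comparison_test'[OF Xs])
    fix k :: nat
    have "(\<Sum>r\<in>UNIV. (cmod (G i k r))\<^sup>2) \<le> X k"
      unfolding X_def
      by (intro sum_mono member_le_sum) (use that in auto)
    then show "norm (\<Sum>r\<in>UNIV. (cmod (G i k r))\<^sup>2) \<le> X k"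
      by (simp add: sum_nonneg)
  qed
  have "(\<Sum>i<m. l2sq (G i)) = (\<Sum>k. \<Sum>i<m. \<Sum>r\<in>UNIV. (cmod (G i k r))\<^sup>2)"
    unfolding l2sq_def using gi by (intro suminf_sum[symmetric]) auto
  also have "\<dots> = suminf X"
    unfolding X_def by (simp add: sum.swap[of _ "{..<m}"])
  also have "\<dots> \<le> (\<Sum>k. L\<^sup>2 * Y k)"
    by (rule suminf_le) (use XY Xs Ys summable_mult in auto)
  also have "\<dots> = L\<^sup>2 * (\<Sum>j<m. l2sq (F j))"
    using suminf_mult[OF Ys, of "L\<^sup>2"] sY by simp
  finally show ?thesis unfolding G_def .
qed

lemma bh_Psi:
  assumes card: "CARD('n::finite) \<ge> 2" and eps: "\<forall>k. 0 < eps k \<and> eps k < 1"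
    and lim: "eps \<longlonglongrightarrow> 0"
  shows "bh_mat_norm m (\<lambda>i j. Psi eps (A i j)) = linf_mat_norm m (A :: nat \<Rightarrow> nat \<Rightarrow> ('n \<Rightarrow> complex))"
proof -
  define L where "L = linf_mat_norm m A"
  have L0: "0 \<le> L" unfolding L_def by (rule linf_nonneg)
  have G: "(\<Sum>j<m. Psi eps (A i j) (F j) k r) = mv m (Mk eps k A r) (\<lambda>j. F j k r) i" for F k r i
    by (simp add: Psi_def mv_def Mk_def)
  define S where "S = {sqrt (\<Sum>i<m. l2sq (\<lambda>k r. \<Sum>j<m. Psi eps (A i j) (F j) k r)) | F.
       (\<forall>j<m. F j \<in> L2) \<and> (\<Sum>j<m. l2sq (F j)) \<le> 1}"
  have bh: "bh_mat_norm m (\<lambda>i j. Psi eps (A i j)) = Sup S"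
    unfolding bh_mat_norm_def S_def ..
  have upper: "x \<le> L" if "x \<in> S" for x
  proof -
    obtain F where x: "x = sqrt (\<Sum>i<m. l2sq (\<lambda>k r. \<Sum>j<m. Psi eps (A i j) (F j) k r))"
      and F: "\<forall>j<m. F j \<in> L2" and F1: "(\<Sum>j<m. l2sq (F j)) \<le> 1"
      using \<open>x \<in> S\<close> unfolding S_def by blast
    have "(\<Sum>i<m. l2sq (\<lambda>k r. \<Sum>j<m. Psi eps (A i j) (F j) k r)) \<le> L\<^sup>2 * (\<Sum>j<m. l2sq (F j))"
      unfolding G
      by (rule upper_sum[OF F _ L0]) (unfold L_def, use Mk_bound card eps in blast)
    also have "\<dots> \<le> L\<^sup>2 * 1" by (rule mult_left_mono[OF F1]) simp
    finally have "(\<Sum>i<m. l2sq (\<lambda>k r. \<Sum>j<m. Psi eps (A i j) (F j) k r)) \<le> L\<^sup>2" by simp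
    then have "sqrt (\<Sum>i<m. l2sq (\<lambda>k r. \<Sum>j<m. Psi eps (A i j) (F j) k r)) \<le> sqrt (L\<^sup>2)"
      by (rule real_sqrt_le_mono)
    then show ?thesis unfolding x using L0 by simp
  qed
  have ne: "S \<noteq> {}"
  proof -
    have "(\<lambda>k r. if k = 0 \<and> r = undefined then 0 else 0) \<in> (L2 :: 'n hvec set)" by (rule single_L2)
    moreover have "l2sq (\<lambda>k r. if k = 0 \<and> r = (undefined::'n) then 0 else 0) = 0" by (simp only: single_l2sq) simp
    ultimately have "(\<lambda>k r. 0) \<in> (L2 :: 'n hvec set)" "l2sq (\<lambda>k (r::'n). 0 :: complex) = (0::real)" 
      by simp_all
    then show ?thesis unfolding S_def by (auto intro!: exI[of _ "\<lambda>j k r. 0"])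
  qed
  have bdd: "bdd_above S" using upper by (auto simp: bdd_above_def)
  have le1: "Sup S \<le> L" using ne upper by (rule cSup_least)
  have elem: "vn m (mv m (Mk eps k A s) v) \<le> Sup S" if v: "vn m v \<le> 1" for k s v
  proof -
    define F where "F j = (\<lambda>k' r. if k' = k \<and> r = s then v j else 0)" for j
    have FL: "\<forall>j<m. F j \<in> L2" unfolding F_def by (auto intro: single_L2)
    have F1: "(\<Sum>j<m. l2sq (F j)) \<le> 1"
      using v unfolding F_def single_l2sq vn_def by simp
    have GF: "(\<lambda>k' r. \<Sum>j<m. Psi eps (A i j) (F j) k' r)
        = (\<lambda>k' r. if k' = k \<and> r = s then mv m (Mk eps k A s) v i else 0)" for i
      unfolding G by (intro ext) (auto simp: F_def mv_def)
    have "sqrt (\<Sum>i<m. l2sq (\<lambda>k r. \<Sum>j<m. Psi eps (A i j) (F j) k r)) \<in> S"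
      unfolding S_def using FL F1 by blast
    moreover have "sqrt (\<Sum>i<m. l2sq (\<lambda>k r. \<Sum>j<m. Psi eps (A i j) (F j) k r)) = vn m (mv m (Mk eps k A s) v)"
      unfolding GF single_l2sq vn_def ..
    ultimately show ?thesis using bdd by (metis cSup_upper)
  qed
  have le2: "L \<le> Sup S"
  proof -
    have "L \<in> range (\<lambda>r. cmat_norm m (\<lambda>i j. A i j r))"
      unfolding L_def linf_mat_norm_def by (rule Max_in) auto
    then obtain s where s: "L = cmat_norm m (\<lambda>i j. A i j s)" by blast
    show ?thesis unfolding s
    proof (rule cmat_least)
      fix v assume "vn m v \<le> 1"
      show "vn m (mv m (\<lambda>i j. A i j s) v) \<le> Sup S"
        by (rule LIMSEQ_le_const2[OF Mk_lim[OF card lim]]) (use elem \<open>vn m v \<le> 1\<close> in blast)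
    qed
  qed
  show ?thesis using le1 le2 bh L_def by simp
qed

lemma cf_le1:
  assumes "CARD('n::finite) \<ge> 2" "0 < eps k" "eps k < 1"
  shows "cf eps k (r::'n) s \<le> 1"
  using assms by (auto simp: cf_def field_simps)

lemma phi_bound:
  assumes "CARD('n::finite) \<ge> 2" "0 < eps k" "eps k < 1"
  shows "cmod (phi eps k (a::'n \<Rightarrow> complex) r) \<le> (\<Sum>s\<in>UNIV. cmod (a s))"
proof -
  have "cmod (phi eps k a r) \<le> (\<Sum>s\<in>UNIV. cmod (complex_of_real (cf eps k r s) * a s))"
    unfolding phi_cf by (rule norm_sum)
  also have "\<dots> \<le> (\<Sum>s\<in>UNIV. cmod (a s))"
  proof (rule sum_mono)
    fix s
    have "0 \<le> cf eps k r s" "cf eps k r s \<le> 1" using cf_nonneg cf_le1 assms by blast+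
    then show "cmod (complex_of_real (cf eps k r s) * a s) \<le> cmod (a s)"
      by (simp add: norm_mult mult_left_le_one_le)
  qed
  finally show ?thesis .
qed

lemma L2_bound:
  assumes f: "f \<in> L2" and B: "0 \<le> B" and le: "\<And>k r. cmod (g k r) \<le> B * cmod (f k r)"
  shows "g \<in> L2" "l2sq g \<le> B\<^sup>2 * l2sq f"
proof -
  have le2: "(\<Sum>r\<in>UNIV. (cmod (g k r))\<^sup>2) \<le> B\<^sup>2 * (\<Sum>r\<in>UNIV. (cmod (f k r))\<^sup>2)" for k
    unfolding sum_distrib_left
    by (rule sum_mono) (metis le norm_ge_zero power_mono power_mult_distrib)
  have fs: "summable (\<lambda>k. B\<^sup>2 * (\<Sum>r\<in>UNIV. (cmod (f k r))\<^sup>2))"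
    using f by (intro summable_mult) (simp add: L2_def)
  have gs: "summable (\<lambda>k. \<Sum>r\<in>UNIV. (cmod (g k r))\<^sup>2)"
    by (rule summable_comparison_test'[OF fs]) (use le2 in \<open>auto simp: sum_nonneg\<close>)
  then show "g \<in> L2" by (simp add: L2_def)
  have "l2sq g \<le> (\<Sum>k. B\<^sup>2 * (\<Sum>r\<in>UNIV. (cmod (f k r))\<^sup>2))"
    unfolding l2sq_def by (rule suminf_le[OF le2 gs fs])
  also have "\<dots> = B\<^sup>2 * l2sq f"
    unfolding l2sq_def using f by (intro suminf_mult) (simp add: L2_def)
  finally show "l2sq g \<le> B\<^sup>2 * l2sq f" .
qed

lemma bounded_Psi:
  assumes card: "CARD('n::finite) \<ge> 2" and eps: "\<forall>k. 0 < eps k \<and> eps k < 1"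
  shows "bounded_op (Psi eps (a::'n \<Rightarrow> complex))"
proof -
  define B where "B = (\<Sum>s\<in>UNIV. cmod (a s))"
  have B: "0 \<le> B" unfolding B_def by (simp add: sum_nonneg)
  have le: "cmod (Psi eps a f k r) \<le> B * cmod (f k r)" for f k r
    unfolding Psi_def B_def norm_mult
    by (rule mult_right_mono[OF phi_bound]) (use card eps in auto)
  have "\<forall>f\<in>L2. l2norm (Psi eps a f) \<le> B * l2norm f"
  proof
    fix f :: "'n hvec" assume "f \<in> L2"
    then have "l2sq (Psi eps a f) \<le> B\<^sup>2 * l2sq f" using L2_bound B le by blast
    then have "sqrt (l2sq (Psi eps a f)) \<le> sqrt (B\<^sup>2 * l2sq f)" by (rule real_sqrt_le_mono)
    then show "l2norm (Psi eps a f) \<le> B * l2norm f"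
      unfolding l2norm_def using B by (simp add: real_sqrt_mult)
  qed
  moreover have "\<forall>f\<in>L2. Psi eps a f \<in> L2"
  proof
    fix f :: "'n hvec" assume "f \<in> L2"
    then show "Psi eps a f \<in> L2" by (rule L2_bound(1)[OF _ B]) (rule le)
  qed
  ultimately show ?thesis unfolding bounded_op_def
    by (auto simp: Psi_def hadd_def hsmul_def algebra_simps)
qed

lemma phi_add: "phi eps k (\<lambda>r. a r + b r) r = phi eps k a r + phi eps k b r"
  unfolding phi_def by (simp add: sum.distrib algebra_simps)

lemma phi_smul: "phi eps k (\<lambda>r. c * a r) r = c * phi eps k a r"
  unfolding phi_def by (simp add: sum_distrib_left[symmetric] algebra_simps)

lemma linear_Psi: "linear_map (Psi eps)"
  unfolding linear_map_def Psi_def hadd_def hsmul_def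
  by (simp add: phi_add phi_smul algebra_simps)

lemma phi_one:
  assumes "CARD('n::finite) \<ge> 2"
  shows "phi eps k (\<lambda>r::'n. 1) r = 1"
proof -
  have "phi eps k (\<lambda>r::'n. 1) r = complex_of_real (\<Sum>s\<in>UNIV. cf eps k r s)"
    unfolding phi_cf by simp
  then show ?thesis using cf_sum[OF assms] by simp
qed

lemma Psi_one:
  assumes "CARD('n::finite) \<ge> 2"
  shows "Psi eps (\<lambda>r::'n. 1) = (\<lambda>f. f)"
  unfolding Psi_def phi_one[OF assms] by simp

lemma sq_diff_le: "(cmod (a - b))\<^sup>2 \<le> 2 * (cmod a)\<^sup>2 + 2 * (cmod b)\<^sup>2"
proof -
  have "cmod (a - b) \<le> cmod a + cmod b" by (rule norm_triangle_ineq4)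
  then have "(cmod (a - b))\<^sup>2 \<le> (cmod a + cmod b)\<^sup>2" by (simp add: power_mono)
  moreover have "2 * cmod a * cmod b \<le> (cmod a)\<^sup>2 + (cmod b)\<^sup>2" by (rule sum_squares_bound)
  ultimately show ?thesis by (simp add: power2_sum)
qed

lemma L2_hsub: "f \<in> L2 \<Longrightarrow> g \<in> L2 \<Longrightarrow> hsub f g \<in> L2"
  unfolding L2_def hsub_def
proof safe
  assume f: "summable (\<lambda>k. \<Sum>r\<in>UNIV. (cmod (f k r))\<^sup>2)" and g: "summable (\<lambda>k. \<Sum>r\<in>UNIV. (cmod (g k r))\<^sup>2)"
  have s: "summable (\<lambda>k. 2 * (\<Sum>r\<in>UNIV. (cmod (f k r))\<^sup>2) + 2 * (\<Sum>r\<in>UNIV. (cmod (g k r))\<^sup>2))"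
    using f g by (intro summable_add summable_mult)
  show "summable (\<lambda>k. \<Sum>r\<in>UNIV. (cmod (f k r - g k r))\<^sup>2)"
  proof (rule summable_comparison_test'[OF s])
    fix k :: nat
    have "(\<Sum>r\<in>UNIV. (cmod (f k r - g k r))\<^sup>2) \<le> (\<Sum>r\<in>UNIV. 2 * (cmod (f k r))\<^sup>2 + 2 * (cmod (g k r))\<^sup>2)"
      by (rule sum_mono) (rule sq_diff_le)
    then show "norm (\<Sum>r\<in>UNIV. (cmod (f k r - g k r))\<^sup>2)
        \<le> 2 * (\<Sum>r\<in>UNIV. (cmod (f k r))\<^sup>2) + 2 * (\<Sum>r\<in>UNIV. (cmod (g k r))\<^sup>2)"
      by (simp add: sum_nonneg sum.distrib sum_distrib_left)
  qed
qed

lemma L2_hsmul: "f \<in> L2 \<Longrightarrow> hsmul c f \<in> L2"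
  unfolding L2_def hsmul_def mem_Collect_eq
proof -
  assume "summable (\<lambda>k. \<Sum>r\<in>UNIV. (cmod (f k r))\<^sup>2)"
  then have "summable (\<lambda>k. (cmod c)\<^sup>2 * (\<Sum>r\<in>UNIV. (cmod (f k r))\<^sup>2))" by (rule summable_mult)
  then show "summable (\<lambda>k. \<Sum>r\<in>UNIV. (cmod (c * f k r))\<^sup>2)"
    by (simp only: norm_mult power_mult_distrib sum_distrib_left)
qed

lemma bo_L2: "bounded_op T \<Longrightarrow> f \<in> L2 \<Longrightarrow> T f \<in> L2"
  unfolding bounded_op_def by simp

lemma bo_add: "bounded_op T \<Longrightarrow> f \<in> L2 \<Longrightarrow> g \<in> L2 \<Longrightarrow> T (hadd f g) = hadd (T f) (T g)"
  unfolding bounded_op_def by simp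

lemma bo_smul: "bounded_op T \<Longrightarrow> f \<in> L2 \<Longrightarrow> T (hsmul c f) = hsmul c (T f)"
  unfolding bounded_op_def by simp

lemma proj_bo: "projection p \<Longrightarrow> bounded_op p"
  unfolding projection_def by simp

lemma proj_idem: "projection p \<Longrightarrow> f \<in> L2 \<Longrightarrow> p (p f) = p f"
  unfolding projection_def by simp

lemma proj_sa: "projection p \<Longrightarrow> f \<in> L2 \<Longrightarrow> g \<in> L2 \<Longrightarrow> l2inner (p f) g = l2inner f (p g)"
  unfolding projection_def by simp

lemma proj_L2: "projection p \<Longrightarrow> f \<in> L2 \<Longrightarrow> p f \<in> L2"
  by (rule bo_L2[OF proj_bo])

lemma proj_hsub:
  assumes p: "projection p" and a: "a \<in> L2" and b: "b \<in> L2"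
  shows "p (hsub a b) = hsub (p a) (p b)"
proof -
  have e1: "hsub a b = hadd a (hsmul (-1) b)" by (simp add: hsub_def hadd_def hsmul_def)
  have e2: "hsub (p a) (p b) = hadd (p a) (hsmul (-1) (p b))" by (simp add: hsub_def hadd_def hsmul_def)
  have bo: "bounded_op p" using p by (rule proj_bo)
  have "p (hadd a (hsmul (-1) b)) = hadd (p a) (p (hsmul (-1) b))"
    by (rule bo_add[OF bo a L2_hsmul[OF b]])
  also have "p (hsmul (-1) b) = hsmul (-1) (p b)"
    by (rule bo_smul[OF bo b])
  finally show ?thesis using e1 e2 by simp
qed

lemma Pp_idem:
  assumes p: "projection p" and f: "f \<in> L2"
  shows "hsub (hsub f (p f)) (p (hsub f (p f))) = hsub f (p f)"
proof -
  have "p (hsub f (p f)) = hsub (p f) (p (p f))"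
    by (rule proj_hsub[OF p f proj_L2[OF p f]])
  also have "\<dots> = hsub (p f) (p f)" using proj_idem[OF p f] by simp
  finally show ?thesis by (simp add: hsub_def)
qed

lemma inner_summable:
  assumes f: "f \<in> L2" and g: "g \<in> L2"
  shows "summable (\<lambda>k. \<Sum>r\<in>UNIV. f k r * cnj (g k r))"
proof -
  have s: "summable (\<lambda>k. (\<Sum>r\<in>UNIV. (cmod (f k r))\<^sup>2) + (\<Sum>r\<in>UNIV. (cmod (g k r))\<^sup>2))"
    using f g unfolding L2_def by (intro summable_add) auto
  show ?thesis
  proof (rule summable_comparison_test'[OF s])
    fix k :: nat
    have "norm (\<Sum>r\<in>UNIV. f k r * cnj (g k r)) \<le> (\<Sum>r\<in>UNIV. cmod (f k r * cnj (g k r)))"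
      by (rule norm_sum)
    also have "\<dots> \<le> (\<Sum>r\<in>UNIV. (cmod (f k r))\<^sup>2 + (cmod (g k r))\<^sup>2)"
    proof (rule sum_mono)
      fix r
      have "2 * cmod (f k r) * cmod (g k r) \<le> (cmod (f k r))\<^sup>2 + (cmod (g k r))\<^sup>2"
        by (rule sum_squares_bound)
      moreover have "0 \<le> cmod (f k r) * cmod (g k r)" by simp
      ultimately show "cmod (f k r * cnj (g k r)) \<le> (cmod (f k r))\<^sup>2 + (cmod (g k r))\<^sup>2"
        unfolding norm_mult complex_mod_cnj by linarith
    qed
    finally show "norm (\<Sum>r\<in>UNIV. f k r * cnj (g k r))
        \<le> (\<Sum>r\<in>UNIV. (cmod (f k r))\<^sup>2) + (\<Sum>r\<in>UNIV. (cmod (g k r))\<^sup>2)"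
      by (simp add: sum.distrib)
  qed
qed

lemma inner_diff_left:
  assumes "f \<in> L2" "g \<in> L2" "h \<in> L2"
  shows "l2inner (hsub f g) h = l2inner f h - l2inner g h"
proof -
  have "l2inner (hsub f g) h = (\<Sum>k. (\<Sum>r\<in>UNIV. f k r * cnj (h k r)) - (\<Sum>r\<in>UNIV. g k r * cnj (h k r)))"
    unfolding l2inner_def hsub_def by (simp add: sum_subtractf algebra_simps)
  also have "\<dots> = l2inner f h - l2inner g h"
    unfolding l2inner_def by (rule suminf_diff[symmetric]) (use inner_summable assms in auto)
  finally show ?thesis .
qed

lemma inner_diff_right:
  assumes "f \<in> L2" "g \<in> L2" "h \<in> L2"
  shows "l2inner f (hsub h g) = l2inner f h - l2inner f g"
proof -
  have "l2inner f (hsub h g) = (\<Sum>k. (\<Sum>r\<in>UNIV. f k r * cnj (h k r)) - (\<Sum>r\<in>UNIV. f k r * cnj (g k r)))"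
    unfolding l2inner_def hsub_def by (simp add: sum_subtractf algebra_simps)
  also have "\<dots> = l2inner f h - l2inner f g"
    unfolding l2inner_def by (rule suminf_diff[symmetric]) (use inner_summable assms in auto)
  finally show ?thesis .
qed

lemma inner_delta:
  "l2inner (\<lambda>k r. if k = k0 \<and> r = (r0::'n::finite) then 1 else 0) x = cnj (x k0 r0)"
proof -
  have "(\<lambda>k. \<Sum>r\<in>UNIV. (if k = k0 \<and> r = r0 then 1 else 0) * cnj (x k r))
      = (\<lambda>k. if k = k0 then cnj (x k0 r0) else 0)"
  proof
    fix k
    show "(\<Sum>r\<in>UNIV. (if k = k0 \<and> r = r0 then 1 else 0) * cnj (x k r)) = (if k = k0 then cnj (x k0 r0) else 0)"
    proof (cases "k = k0")
      case True
      have "(\<Sum>r\<in>UNIV. (if k = k0 \<and> r = r0 then 1 else 0) * cnj (x k r)) = (\<Sum>r\<in>UNIV. if r = r0 then cnj (x k0 r) else 0)"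
        using True by (intro sum.cong) auto
      then show ?thesis using True by (simp add: sum.delta)
    qed simp
  qed
  moreover have "(\<lambda>k. if k = k0 then cnj (x k0 r0) else 0) sums cnj (x k0 r0)"
    using sums_single[of k0 "\<lambda>_. cnj (x k0 r0)"] by simp
  ultimately show ?thesis unfolding l2inner_def by (simp add: sums_iff)
qed

lemma adj_proj:
  fixes q :: "'n::finite hop"
  assumes q: "projection q" and h: "h \<in> L2"
  shows "l2_adjoint (\<lambda>g. hsub g (q g)) h = hsub h (q h)"
proof -
  have qh: "q h \<in> L2" using proj_L2[OF q h] .
  have z: "hsub h (q h) \<in> L2 \<and> (\<forall>f\<in>L2. l2inner (hsub f (q f)) h = l2inner f (hsub h (q h)))"
  proof (intro conjI ballI)
    show "hsub h (q h) \<in> L2" by (rule L2_hsub[OF h qh])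
    fix f :: "'n hvec" assume f: "f \<in> L2"
    have qf: "q f \<in> L2" using proj_L2[OF q f] .
    have sa: "l2inner (q f) h = l2inner f (q h)" by (rule proj_sa[OF q f h])
    show "l2inner (hsub f (q f)) h = l2inner f (hsub h (q h))"
      using inner_diff_left[OF f qf h] inner_diff_right[OF f qh h] sa by simp
  qed
  show ?thesis
    unfolding l2_adjoint_def
  proof (rule the_equality)
    show "hsub h (q h) \<in> L2 \<and> (\<forall>f\<in>L2. l2inner (hsub f (q f)) h = l2inner f (hsub h (q h)))"
      by (rule z)
    fix y assume y: "y \<in> L2 \<and> (\<forall>f\<in>L2. l2inner (hsub f (q f)) h = l2inner f y)"
    show "y = hsub h (q h)"
    proof (intro ext)
      fix k0 :: nat and r0 :: 'n
      define d where "d = (\<lambda>k r. if k = k0 \<and> r = r0 then (1::complex) else 0)"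
      have dL: "d \<in> L2" unfolding d_def by (rule single_L2)
      have "l2inner d y = l2inner d (hsub h (q h))"
        using y z dL by simp
      then have "cnj (y k0 r0) = cnj (hsub h (q h) k0 r0)"
        unfolding d_def inner_delta .
      then show "y k0 r0 = hsub h (q h) k0 r0" by simp
    qed
  qed
qed

lemma phi_e:
  assumes "CARD('n::finite) \<ge> 2" "0 < eps k" "eps k < 1"
  shows "phi eps k (\<lambda>r. if r = s0 then 1 else 0) (r::'n) \<noteq> 0 \<and>
         phi eps k (\<lambda>r. if r = s0 then 1 else 0) (r::'n) \<noteq> 1"
proof -
  have "phi eps k (\<lambda>r. if r = s0 then 1 else 0) r = complex_of_real (cf eps k r s0)"
    unfolding phi_cf by (simp add: if_distrib sum.delta cong: if_cong)
  moreover have "0 < cf eps k r s0" "cf eps k r s0 < 1"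
    using assms by (auto simp: cf_def field_simps)
  ultimately show ?thesis by auto
qed

lemma kill:
  assumes card: "CARD('n::finite) \<ge> 2" and eps: "\<forall>k. 0 < eps k \<and> eps k < 1"
    and eq: "Psi eps (e::'n \<Rightarrow> complex) g = Psi eps e (Psi eps e g)"
    and e: "e = (\<lambda>r. if r = s0 then 1 else 0)"
  shows "g = (\<lambda>k r. 0)"
proof (intro ext)
  fix k r
  define c where "c = phi eps k e r"
  have c: "c \<noteq> 0" "c \<noteq> 1" using phi_e[OF card, of eps k s0 r] eps unfolding c_def e by auto
  have "c * g k r = c * (c * g k r)"
    using fun_cong[OF fun_cong[OF eq, of k], of r] unfolding Psi_def c_def by simp
  then have "c * (1 - c) * g k r = 0" by (simp add: algebra_simps)
  then show "g k r = 0" using c by simp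
qed

lemma triple_T1:
  assumes card: "CARD('n::finite) \<ge> 2"
  shows "(\<lambda>f. hsub (Psi eps (\<lambda>r::'n. 1) f) (q (Psi eps (\<lambda>r::'n. 1) f))) = (\<lambda>g. hsub g (q g))"
  using Psi_one[OF card] by simp

theorem mainTheorem17:
  fixes eps :: "nat \<Rightarrow> real"
  assumes "CARD('n::finite) \<ge> 2"
    and "\<forall>k. 0 < eps k \<and> eps k < 1"
    and "\<forall>k. eps (Suc k) < eps k"
    and "eps \<longlonglongrightarrow> 0"
  shows "unital_map (Psi eps :: ('n \<Rightarrow> complex) \<Rightarrow> 'n hop) \<and>
         complete_isometry (Psi eps :: ('n \<Rightarrow> complex) \<Rightarrow> 'n hop) \<and>
         (\<forall>p q :: 'n hop. projection p \<and> projection q \<and>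
            (\<forall>a. \<forall>f\<in>L2. hsub (Psi eps a f) (q (Psi eps a f)) = Psi eps a (hsub f (p f))) \<and>
            triple_morphism (\<lambda>a f. hsub (Psi eps a f) (q (Psi eps a f)))
          \<longrightarrow> (\<forall>f\<in>L2. p f = f \<and> q f = f)) \<and>
         (\<forall>p :: 'n hop. projection p \<and>
            (\<forall>a. \<forall>f\<in>L2. hsub (Psi eps a f) (p (Psi eps a f)) = Psi eps a (hsub f (p f))) \<and>
            star_hom (\<lambda>a f. hsub (Psi eps a f) (p (Psi eps a f)))
          \<longrightarrow> (\<forall>f\<in>L2. p f = f))"
proof (intro conjI allI impI)
  note card = assms(1) and eps = assms(2) and lim = assms(4)
  define e :: "'n \<Rightarrow> complex" where "e = (\<lambda>r. if r = undefined then 1 else 0)"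
  have PsiL2: "Psi eps a f \<in> L2" if "f \<in> L2" for a :: "'n \<Rightarrow> complex" and f :: "'n hvec"
    using bo_L2[OF bounded_Psi[OF card eps, of a] that] .
  show "unital_map (Psi eps :: ('n \<Rightarrow> complex) \<Rightarrow> 'n hop)"
    unfolding unital_map_def Psi_one[OF card] by simp
  show "complete_isometry (Psi eps :: ('n \<Rightarrow> complex) \<Rightarrow> 'n hop)"
    unfolding complete_isometry_def
    using linear_Psi bounded_Psi[OF card eps] bh_Psi[OF card eps lim] by blast
  show "\<forall>f\<in>L2. p f = f" if H: "projection p \<and>
            (\<forall>a. \<forall>f\<in>L2. hsub (Psi eps a f) (p (Psi eps a f)) = Psi eps a (hsub f (p f))) \<and>
            star_hom (\<lambda>a f. hsub (Psi eps a f) (p (Psi eps a f)))" for p :: "'n hop"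
  proof
    fix f :: "'n hvec" assume f: "f \<in> L2"
    have p: "projection p" using H by simp
    have HH: "\<And>a g. g \<in> L2 \<Longrightarrow> hsub (Psi eps a g) (p (Psi eps a g)) = Psi eps a (hsub g (p g))"
      using H by simp
    have mult: "\<forall>a b. \<forall>g\<in>L2. hsub (Psi eps (\<lambda>r. a r * b r) g) (p (Psi eps (\<lambda>r. a r * b r) g))
        = hsub (Psi eps a (hsub (Psi eps b g) (p (Psi eps b g)))) (p (Psi eps a (hsub (Psi eps b g) (p (Psi eps b g)))))"
      using H unfolding star_hom_def by (elim conjE) assumption
    have ee: "(\<lambda>r. e r * e r) = e" unfolding e_def by auto
    define Tef where "Tef = hsub (Psi eps e f) (p (Psi eps e f))"
    have TefL: "Tef \<in> L2" unfolding Tef_def using PsiL2[OF f] proj_L2[OF p] L2_hsub by blast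
    have Tef: "Tef = Psi eps e (hsub f (p f))" unfolding Tef_def by (rule HH[OF f])
    have "Tef = hsub (Psi eps e Tef) (p (Psi eps e Tef))"
      using mult[rule_format, OF f, of e e] unfolding ee Tef_def by simp
    also have "\<dots> = Psi eps e (hsub Tef (p Tef))" by (rule HH[OF TefL])
    also have "hsub Tef (p Tef) = Tef"
      unfolding Tef_def by (rule Pp_idem[OF p PsiL2[OF f]])
    finally have "Psi eps e (hsub f (p f)) = Psi eps e (Psi eps e (hsub f (p f)))"
      unfolding Tef .
    then have "hsub f (p f) = (\<lambda>k r. 0)" by (rule kill[OF card eps _ e_def])
    then have z0: "hsub f (p f) k r = 0" for k r by simp
    have "p f k r = f k r" for k r using z0[of k r] by (simp add: hsub_def)
    then show "p f = f" by (intro ext)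
  qed
  show "\<forall>f\<in>L2. p f = f \<and> q f = f" if H: "projection p \<and> projection q \<and>
            (\<forall>a. \<forall>f\<in>L2. hsub (Psi eps a f) (q (Psi eps a f)) = Psi eps a (hsub f (p f))) \<and>
            triple_morphism (\<lambda>a f. hsub (Psi eps a f) (q (Psi eps a f)))" for p q :: "'n hop"
  proof
    fix f :: "'n hvec" assume f: "f \<in> L2"
    have p: "projection p" and q: "projection q" using H by simp_all
    have HH: "\<And>a g. g \<in> L2 \<Longrightarrow> hsub (Psi eps a g) (q (Psi eps a g)) = Psi eps a (hsub g (p g))"
      using H by simp
    have qp: "q g = p g" if g: "g \<in> L2" for g
    proof -
      have "hsub g (q g) = hsub g (p g)" using HH[OF g, of "\<lambda>r. 1"] unfolding Psi_one[OF card] by simp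
      then have z1: "hsub g (q g) k r = hsub g (p g) k r" for k r by simp
      have "q g k r = p g k r" for k r using z1[of k r] by (simp add: hsub_def)
      then show ?thesis by (intro ext)
    qed
    have trip: "\<forall>x y z. \<forall>g\<in>L2.
        hsub (Psi eps (\<lambda>r. x r * cnj (y r) * z r) g) (q (Psi eps (\<lambda>r. x r * cnj (y r) * z r) g))
        = hsub (Psi eps x (l2_adjoint (\<lambda>f. hsub (Psi eps y f) (q (Psi eps y f))) (hsub (Psi eps z g) (q (Psi eps z g)))))
               (q (Psi eps x (l2_adjoint (\<lambda>f. hsub (Psi eps y f) (q (Psi eps y f))) (hsub (Psi eps z g) (q (Psi eps z g))))))"
      using H unfolding triple_morphism_def by (elim conjE) assumption
    have exe: "(\<lambda>r. e r * cnj ((\<lambda>r. 1::complex) r) * e r) = e" unfolding e_def by auto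
    define Tef where "Tef = hsub (Psi eps e f) (q (Psi eps e f))"
    have TefL: "Tef \<in> L2" unfolding Tef_def using PsiL2[OF f] proj_L2[OF q] L2_hsub by blast
    have Tef: "Tef = Psi eps e (hsub f (p f))" unfolding Tef_def by (rule HH[OF f])
    have Tef': "Tef = hsub (Psi eps e f) (p (Psi eps e f))" unfolding Tef_def using qp[OF PsiL2[OF f]] by simp
    have adj: "l2_adjoint (\<lambda>f. hsub (Psi eps (\<lambda>r. 1) f) (q (Psi eps (\<lambda>r. 1) f))) Tef = hsub Tef (p Tef)"
      unfolding triple_T1[OF card] adj_proj[OF q TefL] qp[OF TefL] ..
    have adjL: "hsub Tef (p Tef) \<in> L2" using TefL proj_L2[OF p] L2_hsub by blast
    have "Tef = hsub (Psi eps e (hsub Tef (p Tef))) (q (Psi eps e (hsub Tef (p Tef))))"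
      using trip[rule_format, OF f, of e "\<lambda>r. 1" e] unfolding exe Tef_def[symmetric] adj .
    also have "\<dots> = Psi eps e (hsub (hsub Tef (p Tef)) (p (hsub Tef (p Tef))))" by (rule HH[OF adjL])
    also have "hsub (hsub Tef (p Tef)) (p (hsub Tef (p Tef))) = hsub Tef (p Tef)"
      by (rule Pp_idem[OF p TefL])
    also have "hsub Tef (p Tef) = Tef"
      unfolding Tef' by (rule Pp_idem[OF p PsiL2[OF f]])
    finally have "Psi eps e (hsub f (p f)) = Psi eps e (Psi eps e (hsub f (p f)))"
      unfolding Tef .
    then have "hsub f (p f) = (\<lambda>k r. 0)" by (rule kill[OF card eps _ e_def])
    then have z0: "hsub f (p f) k r = 0" for k r by simp
    have "p f k r = f k r" for k r using z0[of k r] by (simp add: hsub_def)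
    then have pf: "p f = f" by (intro ext)
    then show "p f = f \<and> q f = f" using qp[OF f] by simp
  qed
qed

end
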